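(* All the rules of each calculus of the family $\mathsf{CL}^*$ are height-preserving invertible: if the conclusion of a rule instance is derivable with height at most $n$, then each of its premisses is derivable with height at most $n$.
   Context: Height of a derivation = number of nodes on its longest branch minus one. Syntax: world labels $x,y,z,\dots$; neighbourhood labels $a,b,c,\dots$, including $\{x\}$ for each world label $x$. Relational atoms: $a\in N(x)$, $x\in a$, $a\subseteq b$. Labelled formulas: relational atoms, $x:A$, $a\Vdash^{\exists}A$, $a\Vdash^{\forall}A$, $x\Vdash_aA|B$ for formulas of $\mathcal{L}::=p\mid\bot\mid A\wedge B\mid A\lor B\mid A\to B\mid A>B$. Sequents $\Gamma\Rightarrow\Delta$: multisets, relational atoms only in $\Gamma$. Rules of $\mathsf{CL}$ ("(u!)": $u$ not in conclusion; notation premisses / conclusion): initial sequents $x:p,\Gamma\Rightarrow\Delta,x:p$ ($p$ atomic), $x:\bot,\Gamma\Rightarrow\Delta$; G3 rules for $\wedge,\vee,\to$ on $x:A$; L$\forall$: $x:A,x\in a,a\Vdash^\forall A,\Gamma\Rightarrow\Delta$ / $x\in a,a\Vdash^\forall A,\Gamma\Rightarrow\Delta$; R$\forall$(x!): $x\in a,\Gamma\Rightarrow\Delta,x:A$ / $\Gamma\Rightarrow\Delta,a\Vdash^\forall A$; L$\exists$(x!): $x\in a,x:A,\Gamma\Rightarrow\Delta$ / $a\Vdash^\exists A,\Gamma\Rightarrow\Delta$; R$\exists$: $x\in a,\Gamma\Rightarrow\Delta,x:A,a\Vdash^\exists A$ / $x\in a,\Gamma\Rightarrow\Delta,a\Vdash^\exists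 A$; R$>$(a!): $a\in N(x),a\Vdash^\exists A,\Gamma\Rightarrow\Delta,x\Vdash_aA|B$ / $\Gamma\Rightarrow\Delta,x:A>B$; L$>$: $a\in N(x),x:A>B,\Gamma\Rightarrow\Delta,a\Vdash^\exists A$ and $x\Vdash_aA|B,a\in N(x),x:A>B,\Gamma\Rightarrow\Delta$ / $a\in N(x),x:A>B,\Gamma\Rightarrow\Delta$; R$|$: $c\in N(x),c\subseteq a,\Gamma\Rightarrow\Delta,x\Vdash_aA|B,c\Vdash^\exists A$ and $c\in N(x),c\subseteq a,\Gamma\Rightarrow\Delta,x\Vdash_aA|B,c\Vdash^\forall A\to B$ / $c\in N(x),c\subseteq a,\Gamma\Rightarrow\Delta,x\Vdash_aA|B$; L$|$(c!): $c\in N(x),c\subseteq a,c\Vdash^\exists A,c\Vdash^\forall A\to B,\Gamma\Rightarrow\Delta$ / $x\Vdash_aA|B,\Gamma\Rightarrow\Delta$; Ref: $a\subseteq a,\Gamma\Rightarrow\Delta$ / $\Gamma\Rightarrow\Delta$; Tr: $c\subseteq a,c\subseteq b,b\subseteq a,\Gamma\Rightarrow\Delta$ / $c\subseteq b,b\subseteq a,\Gamma\Rightarrow\Delta$; L$\subseteq$: $x\in a,a\subseteq b,x\in b,\Gamma\Rightarrow\Delta$ / $x\in a,a\subseteq b,\Gamma\Rightarrow\Delta$. Extension rules: N(a!): $a\in N(x),\Gamma\Rightarrow\Delta$ / $\Gamma\Rightarrow\Delta$; 0(y!): $y\in a,a\in N(x),\Gamma\Rightarrow\Delta$ / $a\in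 N(x),\Gamma\Rightarrow\Delta$; T(a!): $x\in a,a\in N(x),\Gamma\Rightarrow\Delta$ / $\Gamma\Rightarrow\Delta$; W: $x\in a,a\in N(x),\Gamma\Rightarrow\Delta$ / $a\in N(x),\Gamma\Rightarrow\Delta$; Single: $x\in\{x\},\{x\}\in N(x),\Gamma\Rightarrow\Delta$ / $\{x\}\in N(x),\Gamma\Rightarrow\Delta$; C: $\{x\}\in N(x),\{x\}\subseteq a,a\in N(x),\Gamma\Rightarrow\Delta$ / $a\in N(x),\Gamma\Rightarrow\Delta$; Repl$_1$: $y\in\{x\},At(x),At(y),\Gamma\Rightarrow\Delta$ / $y\in\{x\},At(x),\Gamma\Rightarrow\Delta$; Repl$_2$: same premiss / $y\in\{x\},At(y),\Gamma\Rightarrow\Delta$, with $At(x)$ among $x:P$ ($P$ atomic), $x\in a$, $a\in N(x)$, $x\in\{z\}$; U$_1$(c!): $z\in c,c\in N(x),a\in N(x),y\in a,b\in N(y),z\in b,\Gamma\Rightarrow\Delta$ / $a\in N(x),y\in a,b\in N(y),z\in b,\Gamma\Rightarrow\Delta$; U$_2$(c!): $z\in c,c\in N(y),a\in N(x),y\in a,b\in N(x),z\in b,\Gamma\Rightarrow\Delta$ / $a\in N(x),y\in a,b\in N(x),z\in b,\Gamma\Rightarrow\Delta$; A$_1$: $b\in N(y),a\in N(x),y\in a,b\in N(x),\Gamma\Rightarrow\Delta$ / $a\in N(x),y\in a,b\in N(x),\Gamma\Rightarrow\Delta$; A$_2$: $b\in N(x),a\in N(x),y\in a,b\in N(y),\Gamma\Rightarrow\Delta$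 / $a\in N(x),y\in a,b\in N(y),\Gamma\Rightarrow\Delta$; plus contracted instances of U$_1$,U$_2$,A$_1$. Family $\mathsf{CL}^*$: $\mathsf{CL}$; $\mathsf{CL}^N=\mathsf{CL}+$N,0; $\mathsf{CL}^T=\mathsf{CL}^N+$T; $\mathsf{CL}^W=\mathsf{CL}^T+$W; $\mathsf{CL}^C=\mathsf{CL}^W+$C,Single,Repl$_1$,Repl$_2$; $\mathsf{CL}^U=\mathsf{CL}+$U$_1$,U$_2$; $\mathsf{CL}^{NU},\dots,\mathsf{CL}^{CU}$ = $\mathsf{CL}^N,\dots,\mathsf{CL}^C$ + U$_1$,U$_2$; $\mathsf{CL}^A=\mathsf{CL}+$A$_1$,A$_2$; $\mathsf{CL}^{NA},\dots,\mathsf{CL}^{CA}$ = $\mathsf{CL}^N,\dots,\mathsf{CL}^C$ + A$_1$,A$_2$. *)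

theory Defs
  imports Main "HOL-Library.Multiset"
begin

text \<open>Formulas of the language L (atoms of type 'p; A > B is the conditional).\<close>
datatype 'p fm = Atom 'p | Bot | And "'p fm" "'p fm" | Or "'p fm" "'p fm"
  | Imp "'p fm" "'p fm" | Cond "'p fm" "'p fm"

text \<open>World labels are natural numbers. Neighbourhood labels are either
  variable labels NL k or singleton labels Sing x, i.e. {x}.\<close>
datatype nbh = NL nat | Sing nat

text \<open>Labelled formulas:
  InN a x = a in N(x);  Mem x a = x in a;  Sub a b = a subseteq b;
  Lab x A = x:A;  Ex a A = a forces-exists A;  All a A = a forces-forall A;
  Cnd x a A B = x forces_a A|B.\<close>
datatype 'p lf = InN nbh nat | Mem nat nbh | Sub nbh nbh
  | Lab nat "'p fm" | Ex nbh "'p fm" | All nbh "'p fm" | Cnd nat nbh "'p fm" "'p fm"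

type_synonym 'p seq = "'p lf multiset \<times> 'p lf multiset"

fun is_rel :: "'p lf \<Rightarrow> bool" where
  "is_rel (InN a x) = True"
| "is_rel (Mem x a) = True"
| "is_rel (Sub a b) = True"
| "is_rel _ = False"

definition wf_seq :: "'p seq \<Rightarrow> bool" where
  "wf_seq S \<longleftrightarrow> (\<forall>\<phi>\<in>#snd S. \<not> is_rel \<phi>)"

fun nb_worlds :: "nbh \<Rightarrow> nat set" where
  "nb_worlds (NL k) = {}"
| "nb_worlds (Sing x) = {x}"

fun nb_vars :: "nbh \<Rightarrow> nat set" where
  "nb_vars (NL k) = {k}"
| "nb_vars (Sing x) = {}"

fun lf_worlds :: "'p lf \<Rightarrow> nat set" where
  "lf_worlds (InN a x) = insert x (nb_worlds a)"
| "lf_worlds (Mem x a) = insert x (nb_worlds a)"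
| "lf_worlds (Sub a b) = nb_worlds a \<union> nb_worlds b"
| "lf_worlds (Lab x A) = {x}"
| "lf_worlds (Ex a A) = nb_worlds a"
| "lf_worlds (All a A) = nb_worlds a"
| "lf_worlds (Cnd x a A B) = insert x (nb_worlds a)"

fun lf_nvars :: "'p lf \<Rightarrow> nat set" where
  "lf_nvars (InN a x) = nb_vars a"
| "lf_nvars (Mem x a) = nb_vars a"
| "lf_nvars (Sub a b) = nb_vars a \<union> nb_vars b"
| "lf_nvars (Lab x A) = {}"
| "lf_nvars (Ex a A) = nb_vars a"
| "lf_nvars (All a A) = nb_vars a"
| "lf_nvars (Cnd x a A B) = nb_vars a"

definition seq_worlds :: "'p seq \<Rightarrow> nat set" where
  "seq_worlds S = (\<Union>\<phi>\<in>set_mset (fst S) \<union> set_mset (snd S). lf_worlds \<phi>)"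

definition seq_nvars :: "'p seq \<Rightarrow> nat set" where
  "seq_nvars S = (\<Union>\<phi>\<in>set_mset (fst S) \<union> set_mset (snd S). lf_nvars \<phi>)"

text \<open>Shapes of the atoms At(x) in the replacement rules:
  x:P (P atomic), x in a (including x in {z}), a in N(x).\<close>
datatype 'p atshape = AtP 'p | AtMem nbh | AtNb nbh

fun atx :: "'p atshape \<Rightarrow> nat \<Rightarrow> 'p lf" where
  "atx (AtP p) x = Lab x (Atom p)"
| "atx (AtMem a) x = Mem x a"
| "atx (AtNb a) x = InN a x"

datatype rname = LAnd | RAnd | LOr | ROr | LImp | RImp
  | LAll | RAll | LEx | REx | RCond | LCond | RBar | LBar
  | Ref | Tr | LSub
  | RuleN | Rule0 | RuleT | RuleW | Single | RuleC | Repl1 | Repl2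
  | U1 | U2 | A1 | A2

text \<open>Contracted instances: the list of principal relational atoms may have
  repetitions (arising from identified labels) contracted.\<close>
definition contr :: "'a list \<Rightarrow> 'a list \<Rightarrow> bool" where
  "contr ps' ps \<longleftrightarrow> mset ps' \<subseteq># mset ps \<and> set ps' = set ps"

inductive rinst :: "rname \<Rightarrow> 'p seq list \<Rightarrow> 'p seq \<Rightarrow> bool" where
  "rinst LAnd [({#Lab x A, Lab x B#} + G, D)] ({#Lab x (And A B)#} + G, D)"
| "rinst RAnd [(G, D + {#Lab x A#}), (G, D + {#Lab x B#})] (G, D + {#Lab x (And A B)#})"
| "rinst LOr [({#Lab x A#} + G, D), ({#Lab x B#} + G, D)] ({#Lab x (Or A B)#} + G, D)"
| "rinst ROr [(G, D + {#Lab x A, Lab x B#})] (G, D + {#Lab x (Or A B)#})"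
| "rinst LImp [(G, D + {#Lab x A#}), ({#Lab x B#} + G, D)] ({#Lab x (Imp A B)#} + G, D)"
| "rinst RImp [({#Lab x A#} + G, D + {#Lab x B#})] (G, D + {#Lab x (Imp A B)#})"
| "rinst LAll [({#Lab x A, Mem x a, All a A#} + G, D)] ({#Mem x a, All a A#} + G, D)"
| "x \<notin> seq_worlds (G, D + {#All a A#}) \<Longrightarrow>
   rinst RAll [({#Mem x a#} + G, D + {#Lab x A#})] (G, D + {#All a A#})"
| "x \<notin> seq_worlds ({#Ex a A#} + G, D) \<Longrightarrow>
   rinst LEx [({#Mem x a, Lab x A#} + G, D)] ({#Ex a A#} + G, D)"
| "rinst REx [({#Mem x a#} + G, D + {#Lab x A, Ex a A#})] ({#Mem x a#} + G, D + {#Ex a A#})"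
| "k \<notin> seq_nvars (G, D + {#Lab x (Cond A B)#}) \<Longrightarrow>
   rinst RCond [({#InN (NL k) x, Ex (NL k) A#} + G, D + {#Cnd x (NL k) A B#})]
               (G, D + {#Lab x (Cond A B)#})"
| "rinst LCond [({#InN a x, Lab x (Cond A B)#} + G, D + {#Ex a A#}),
                ({#Cnd x a A B, InN a x, Lab x (Cond A B)#} + G, D)]
               ({#InN a x, Lab x (Cond A B)#} + G, D)"
| "rinst RBar [({#InN c x, Sub c a#} + G, D + {#Cnd x a A B, Ex c A#}),
               ({#InN c x, Sub c a#} + G, D + {#Cnd x a A B, All c (Imp A B)#})]
              ({#InN c x, Sub c a#} + G, D + {#Cnd x a A B#})"
| "k \<notin> seq_nvars ({#Cnd x a A B#} + G, D) \<Longrightarrow>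
   rinst LBar [({#InN (NL k) x, Sub (NL k) a, Ex (NL k) A, All (NL k) (Imp A B)#} + G, D)]
              ({#Cnd x a A B#} + G, D)"
| "rinst Ref [({#Sub a a#} + G, D)] (G, D)"
| "rinst Tr [({#Sub c a, Sub c b, Sub b a#} + G, D)] ({#Sub c b, Sub b a#} + G, D)"
| "rinst LSub [({#Mem x a, Sub a b, Mem x b#} + G, D)] ({#Mem x a, Sub a b#} + G, D)"
| "k \<notin> seq_nvars (G, D) \<Longrightarrow>
   rinst RuleN [({#InN (NL k) x#} + G, D)] (G, D)"
| "y \<notin> seq_worlds ({#InN a x#} + G, D) \<Longrightarrow>
   rinst Rule0 [({#Mem y a, InN a x#} + G, D)] ({#InN a x#} + G, D)"
| "k \<notin> seq_nvars (G, D) \<Longrightarrow>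
   rinst RuleT [({#Mem x (NL k), InN (NL k) x#} + G, D)] (G, D)"
| "rinst RuleW [({#Mem x a, InN a x#} + G, D)] ({#InN a x#} + G, D)"
| "rinst Single [({#Mem x (Sing x), InN (Sing x) x#} + G, D)] ({#InN (Sing x) x#} + G, D)"
| "rinst RuleC [({#InN (Sing x) x, Sub (Sing x) a, InN a x#} + G, D)] ({#InN a x#} + G, D)"
| "rinst Repl1 [({#Mem y (Sing x), atx s x, atx s y#} + G, D)] ({#Mem y (Sing x), atx s x#} + G, D)"
| "rinst Repl2 [({#Mem y (Sing x), atx s x, atx s y#} + G, D)] ({#Mem y (Sing x), atx s y#} + G, D)"
| "contr ps [InN a x, Mem y a, InN b y, Mem z b] \<Longrightarrow> k \<notin> seq_nvars (mset ps + G, D) \<Longrightarrow>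
   rinst U1 [({#Mem z (NL k), InN (NL k) x#} + mset ps + G, D)] (mset ps + G, D)"
| "contr ps [InN a x, Mem y a, InN b x, Mem z b] \<Longrightarrow> k \<notin> seq_nvars (mset ps + G, D) \<Longrightarrow>
   rinst U2 [({#Mem z (NL k), InN (NL k) y#} + mset ps + G, D)] (mset ps + G, D)"
| "contr ps [InN a x, Mem y a, InN b x] \<Longrightarrow>
   rinst A1 [({#InN b y#} + mset ps + G, D)] (mset ps + G, D)"
| "rinst A2 [({#InN b x, InN a x, Mem y a, InN b y#} + G, D)] ({#InN a x, Mem y a, InN b y#} + G, D)"

inductive initial :: "'p seq \<Rightarrow> bool" where
  "initial ({#Lab x (Atom p)#} + G, D + {#Lab x (Atom p)#})"
| "initial ({#Lab x Bot#} + G, D)"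

datatype base = CLb | Nb | Tb | Wb | Cb
datatype ext = NoExt | UExt | AExt
type_synonym calc = "base \<times> ext"

definition core_rules :: "rname set" where
  "core_rules = {LAnd, RAnd, LOr, ROr, LImp, RImp, LAll, RAll, LEx, REx,
                 RCond, LCond, RBar, LBar, Ref, Tr, LSub}"

fun base_rules :: "base \<Rightarrow> rname set" where
  "base_rules CLb = {}"
| "base_rules Nb = {RuleN, Rule0}"
| "base_rules Tb = {RuleN, Rule0, RuleT}"
| "base_rules Wb = {RuleN, Rule0, RuleT, RuleW}"
| "base_rules Cb = {RuleN, Rule0, RuleT, RuleW, RuleC, Single, Repl1, Repl2}"

fun ext_rules :: "ext \<Rightarrow> rname set" where
  "ext_rules NoExt = {}"
| "ext_rules UExt = {U1, U2}"
| "ext_rules AExt = {A1, A2}"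

definition rules :: "calc \<Rightarrow> rname set" where
  "rules L = core_rules \<union> base_rules (fst L) \<union> ext_rules (snd L)"

text \<open>derivable L n S: S has a derivation in calculus L of height at most n
  (height = number of nodes on the longest branch minus one).\<close>
inductive derivable :: "calc \<Rightarrow> nat \<Rightarrow> 'p seq \<Rightarrow> bool" where
  init: "initial S \<Longrightarrow> derivable L n S"
| step: "R \<in> rules L \<Longrightarrow> rinst R ps S \<Longrightarrow> (\<forall>P\<in>set ps. derivable L n P) \<Longrightarrow>
         derivable L (Suc n) S"

end

theory Submission
  imports Defs
begin


fun rnb :: "(nat\<Rightarrow>nat) \<Rightarrow> (nat\<Rightarrow>nat) \<Rightarrow> nbh \<Rightarrow> nbh" where
  "rnb f g (NL k) = NL (g k)" | "rnb f g (Sing x) = Sing (f x)"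

fun rlf :: "(nat\<Rightarrow>nat) \<Rightarrow> (nat\<Rightarrow>nat) \<Rightarrow> 'p lf \<Rightarrow> 'p lf" where
  "rlf f g (InN a x) = InN (rnb f g a) (f x)"
| "rlf f g (Mem x a) = Mem (f x) (rnb f g a)"
| "rlf f g (Sub a b) = Sub (rnb f g a) (rnb f g b)"
| "rlf f g (Lab x A) = Lab (f x) A"
| "rlf f g (Ex a A) = Ex (rnb f g a) A"
| "rlf f g (All a A) = All (rnb f g a) A"
| "rlf f g (Cnd x a A B) = Cnd (f x) (rnb f g a) A B"

definition rseq :: "(nat\<Rightarrow>nat) \<Rightarrow> (nat\<Rightarrow>nat) \<Rightarrow> 'p seq \<Rightarrow> 'p seq" where
  "rseq f g S = (image_mset (rlf f g) (fst S), image_mset (rlf f g) (snd S))"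

definition addW :: "'p seq \<Rightarrow> 'p seq \<Rightarrow> 'p seq" where
  "addW W S = (fst S + fst W, snd S + snd W)"

inductive crule :: "rname \<Rightarrow> 'p seq list \<Rightarrow> 'p seq \<Rightarrow> nat set \<Rightarrow> nat set \<Rightarrow> bool" where
  "crule LAnd [({#Lab x A, Lab x B#}, {#})] ({#Lab x (And A B)#}, {#}) {} {}"
| "crule RAnd [({#}, {#Lab x A#}), ({#}, {#Lab x B#})] ({#}, {#Lab x (And A B)#}) {} {}"
| "crule LOr [({#Lab x A#}, {#}), ({#Lab x B#}, {#})] ({#Lab x (Or A B)#}, {#}) {} {}"
| "crule ROr [({#}, {#Lab x A, Lab x B#})] ({#}, {#Lab x (Or A B)#}) {} {}"
| "crule LImp [({#}, {#Lab x A#}), ({#Lab x B#}, {#})] ({#Lab x (Imp A B)#}, {#}) {} {}"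
| "crule RImp [({#Lab x A#}, {#Lab x B#})] ({#}, {#Lab x (Imp A B)#}) {} {}"
| "crule LAll [({#Lab x A, Mem x a, All a A#}, {#})] ({#Mem x a, All a A#}, {#}) {} {}"
| "x \<notin> nb_worlds a \<Longrightarrow> crule RAll [({#Mem x a#}, {#Lab x A#})] ({#}, {#All a A#}) {x} {}"
| "x \<notin> nb_worlds a \<Longrightarrow> crule LEx [({#Mem x a, Lab x A#}, {#})] ({#Ex a A#}, {#}) {x} {}"
| "crule REx [({#Mem x a#}, {#Lab x A, Ex a A#})] ({#Mem x a#}, {#Ex a A#}) {} {}"
| "crule RCond [({#InN (NL k) x, Ex (NL k) A#}, {#Cnd x (NL k) A B#})] ({#}, {#Lab x (Cond A B)#}) {} {k}"
| "crule LCond [({#InN a x, Lab x (Cond A B)#}, {#Ex a A#}),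
                ({#Cnd x a A B, InN a x, Lab x (Cond A B)#}, {#})]
               ({#InN a x, Lab x (Cond A B)#}, {#}) {} {}"
| "crule RBar [({#InN c x, Sub c a#}, {#Cnd x a A B, Ex c A#}),
               ({#InN c x, Sub c a#}, {#Cnd x a A B, All c (Imp A B)#})]
              ({#InN c x, Sub c a#}, {#Cnd x a A B#}) {} {}"
| "k \<notin> nb_vars a \<Longrightarrow>
   crule LBar [({#InN (NL k) x, Sub (NL k) a, Ex (NL k) A, All (NL k) (Imp A B)#}, {#})]
              ({#Cnd x a A B#}, {#}) {} {k}"
| "crule Ref [({#Sub a a#}, {#})] ({#}, {#}) {} {}"
| "crule Tr [({#Sub c a, Sub c b, Sub b a#}, {#})] ({#Sub c b, Sub b a#}, {#}) {} {}"
| "crule LSub [({#Mem x a, Sub a b, Mem x b#}, {#})] ({#Mem x a, Sub a b#}, {#}) {} {}"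
| "crule RuleN [({#InN (NL k) x#}, {#})] ({#}, {#}) {} {k}"
| "y \<notin> nb_worlds a \<Longrightarrow> y \<noteq> x \<Longrightarrow> crule Rule0 [({#Mem y a, InN a x#}, {#})] ({#InN a x#}, {#}) {y} {}"
| "crule RuleT [({#Mem x (NL k), InN (NL k) x#}, {#})] ({#}, {#}) {} {k}"
| "crule RuleW [({#Mem x a, InN a x#}, {#})] ({#InN a x#}, {#}) {} {}"
| "crule Single [({#Mem x (Sing x), InN (Sing x) x#}, {#})] ({#InN (Sing x) x#}, {#}) {} {}"
| "crule RuleC [({#InN (Sing x) x, Sub (Sing x) a, InN a x#}, {#})] ({#InN a x#}, {#}) {} {}"
| "crule Repl1 [({#Mem y (Sing x), atx s x, atx s y#}, {#})] ({#Mem y (Sing x), atx s x#}, {#}) {} {}"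
| "crule Repl2 [({#Mem y (Sing x), atx s x, atx s y#}, {#})] ({#Mem y (Sing x), atx s y#}, {#}) {} {}"
| "contr ps [InN a x, Mem y a, InN b y, Mem z b] \<Longrightarrow> k \<notin> seq_nvars (mset ps, {#}) \<Longrightarrow>
   crule U1 [({#Mem z (NL k), InN (NL k) x#} + mset ps, {#})] (mset ps, {#}) {} {k}"
| "contr ps [InN a x, Mem y a, InN b x, Mem z b] \<Longrightarrow> k \<notin> seq_nvars (mset ps, {#}) \<Longrightarrow>
   crule U2 [({#Mem z (NL k), InN (NL k) y#} + mset ps, {#})] (mset ps, {#}) {} {k}"
| "contr ps [InN a x, Mem y a, InN b x] \<Longrightarrow>
   crule A1 [({#InN b y#} + mset ps, {#})] (mset ps, {#}) {} {}"
| "crule A2 [({#InN b x, InN a x, Mem y a, InN b y#}, {#})] ({#InN a x, Mem y a, InN b y#}, {#}) {} {}"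

lemma seq_worlds_pair[simp]: "seq_worlds (G, D) = (\<Union>x\<in>set_mset G. lf_worlds x) \<union> (\<Union>x\<in>set_mset D. lf_worlds x)"
  by (auto simp: seq_worlds_def)
lemma seq_nvars_pair[simp]: "seq_nvars (G, D) = (\<Union>x\<in>set_mset G. lf_nvars x) \<union> (\<Union>x\<in>set_mset D. lf_nvars x)"
  by (auto simp: seq_nvars_def)

lemma rinst_crule: "rinst R ps S \<Longrightarrow> (\<exists>Ps C Ew Ev G D. crule R Ps C Ew Ev \<and> S = addW (G,D) C \<and> ps = map (addW (G,D)) Ps
   \<and> Ew \<inter> seq_worlds (G,D) = {} \<and> Ev \<inter> seq_nvars (G,D) = {})"
  by (erule rinst.cases) (fastforce intro: crule.intros simp: addW_def)+

lemmas rinst_intros' = rinst.intros[simplified]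

lemma crule_rinst: "crule R Ps C Ew Ev \<Longrightarrow> Ew \<inter> seq_worlds (G,D) = {} \<Longrightarrow> Ev \<inter> seq_nvars (G,D) = {} \<Longrightarrow>
   rinst R (map (addW (G,D)) Ps) (addW (G,D) C)"
  apply (erule crule.cases)
  apply (auto simp: addW_def intro!: rinst_intros')
  done
lemma nb_worlds_rnb[simp]: "nb_worlds (rnb f g a) = f ` nb_worlds a" by (cases a) auto
lemma nb_vars_rnb[simp]: "nb_vars (rnb f g a) = g ` nb_vars a" by (cases a) auto
lemma lf_worlds_rlf[simp]: "lf_worlds (rlf f g p) = f ` lf_worlds p" by (cases p) auto
lemma lf_nvars_rlf[simp]: "lf_nvars (rlf f g p) = g ` lf_nvars p" by (cases p) auto
lemma seq_worlds_rseq[simp]: "seq_worlds (rseq f g S) = f ` seq_worlds S"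
  by (auto simp: seq_worlds_def rseq_def)
lemma seq_nvars_rseq[simp]: "seq_nvars (rseq f g S) = g ` seq_nvars S"
  by (auto simp: seq_nvars_def rseq_def)
lemma rlf_atx[simp]: "rlf f g (atx s x) = atx (case s of AtP p \<Rightarrow> AtP p | AtMem a \<Rightarrow> AtMem (rnb f g a) | AtNb a \<Rightarrow> AtNb (rnb f g a)) (f x)"
  by (cases s) auto
lemma contr_map: "contr ps l \<Longrightarrow> contr (map h ps) (map h l)"
  unfolding contr_def by (auto intro: image_mset_subseteq_mono)

lemmas crule_intros' = crule.intros[simplified]

lemma crule_ren: "crule R Ps C Ew Ev \<Longrightarrow> inj f \<Longrightarrow> inj g \<Longrightarrow>
   crule R (map (rseq f g) Ps) (rseq f g C) (f ` Ew) (g ` Ev)"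
  apply (erule crule.cases)
  apply (auto simp: rseq_def inj_eq intro!: crule_intros')
  apply ((simp only: mset_map[symmetric], rule crule_intros', drule contr_map[where h="rlf f g"], auto simp: inj_eq)+)
  done

lemma rinst_crule': "rinst R ps S \<Longrightarrow> (\<exists>Ps C Ew Ev W. crule R Ps C Ew Ev \<and> S = addW W C \<and> ps = map (addW W) Ps
   \<and> Ew \<inter> seq_worlds W = {} \<and> Ev \<inter> seq_nvars W = {})"
  by (drule rinst_crule) blast

lemma crule_rinst': "crule R Ps C Ew Ev \<Longrightarrow> Ew \<inter> seq_worlds W = {} \<Longrightarrow> Ev \<inter> seq_nvars W = {} \<Longrightarrow>
   rinst R (map (addW W) Ps) (addW W C)"
  using crule_rinst[of R Ps C Ew Ev "fst W" "snd W"] by simp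

lemma rseq_addW: "rseq f g (addW W S) = addW (rseq f g W) (rseq f g S)"
  by (simp add: rseq_def addW_def)

lemma addW_addW: "addW W (addW W0 X) = addW (addW W W0) X"
  by (simp add: addW_def add.assoc)

lemma seq_worlds_addW[simp]: "seq_worlds (addW W S) = seq_worlds W \<union> seq_worlds S"
  by (auto simp: seq_worlds_def addW_def)
lemma seq_nvars_addW[simp]: "seq_nvars (addW W S) = seq_nvars W \<union> seq_nvars S"
  by (auto simp: seq_nvars_def addW_def)

lemma rinst_ren: "rinst R ps S \<Longrightarrow> inj f \<Longrightarrow> inj g \<Longrightarrow> rinst R (map (rseq f g) ps) (rseq f g S)"
proof -
  assume r: "rinst R ps S" and f: "inj f" and g: "inj g"
  from rinst_crule'[OF r] obtain Ps C Ew Ev W where c: "crule R Ps C Ew Ev" and S: "S = addW W C"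
    and ps: "ps = map (addW W) Ps" and fw: "Ew \<inter> seq_worlds W = {}" and fv: "Ev \<inter> seq_nvars W = {}" by blast
  have c2: "crule R (map (rseq f g) Ps) (rseq f g C) (f ` Ew) (g ` Ev)" using crule_ren[OF c f g] .
  have "f ` Ew \<inter> seq_worlds (rseq f g W) = {}" using fw f by (simp add: image_Int[symmetric])
  moreover have "g ` Ev \<inter> seq_nvars (rseq f g W) = {}" using fv g by (simp add: image_Int[symmetric])
  ultimately have "rinst R (map (addW (rseq f g W)) (map (rseq f g) Ps)) (addW (rseq f g W) (rseq f g C))"
    using crule_rinst'[OF c2] by blast
  then show ?thesis using S ps by (simp add: rseq_addW comp_def)
qed

lemma initial_iff: "initial S \<longleftrightarrow> (\<exists>x p. Lab x (Atom p) \<in># fst S \<and> Lab x (Atom p) \<in># snd S) \<or> (\<exists>x. Lab x Bot \<in># fst S)"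
proof
  assume "initial S" then show "(\<exists>x p. Lab x (Atom p) \<in># fst S \<and> Lab x (Atom p) \<in># snd S) \<or> (\<exists>x. Lab x Bot \<in># fst S)"
    by (cases rule: initial.cases) auto
next
  assume "(\<exists>x p. Lab x (Atom p) \<in># fst S \<and> Lab x (Atom p) \<in># snd S) \<or> (\<exists>x. Lab x Bot \<in># fst S)"
  then show "initial S"
  proof
    assume "\<exists>x p. Lab x (Atom p) \<in># fst S \<and> Lab x (Atom p) \<in># snd S"
    then obtain x p where a: "Lab x (Atom p) \<in># fst S" and b: "Lab x (Atom p) \<in># snd S" by blast
    from multi_member_split[OF a] obtain G where G: "fst S = {#Lab x (Atom p)#} + G" by auto
    from multi_member_split[OF b] obtain D where D: "snd S = D + {#Lab x (Atom p)#}" by auto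
    have "S = ({#Lab x (Atom p)#} + G, D + {#Lab x (Atom p)#})" using G D by (metis prod.collapse)
    then show ?thesis by (simp only: initial.intros)
  next
    assume "\<exists>x. Lab x Bot \<in># fst S"
    then obtain x where a: "Lab x Bot \<in># fst S" by blast
    from multi_member_split[OF a] obtain G where G: "fst S = {#Lab x Bot#} + G" by auto
    have "S = ({#Lab x Bot#} + G, snd S)" using G by (metis prod.collapse)
    then show ?thesis by (metis initial.intros(2))
  qed
qed

lemma derivable_ren: "derivable L n S \<Longrightarrow> inj f \<Longrightarrow> inj g \<Longrightarrow> derivable L n (rseq f g S)"
proof (induction rule: derivable.induct)
  case (init S L n)
  then show ?case unfolding initial_iff rseq_def
    by (auto intro!: derivable.init simp: initial_iff) (metis image_eqI rlf.simps(4) fm.distinct)+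
next
  case (step R L ps S n)
  then show ?case using rinst_ren[OF step(2)] by (auto intro!: derivable.step)
qed

lemma derivable_mono: "derivable L n S \<Longrightarrow> n \<le> m \<Longrightarrow> derivable L m S"
proof (induction arbitrary: m rule: derivable.induct)
  case (init S L n) then show ?case by (simp add: derivable.init)
next
  case (step R L ps S n)
  then obtain m' where "m = Suc m'" "n \<le> m'" by (cases m) auto
  then show ?case using step by (auto intro!: derivable.step)
qed


lemma crule_E: "crule R Ps C Ew Ev \<Longrightarrow> Ew \<subseteq> (\<Union>P\<in>set Ps. seq_worlds P) \<and> Ew \<inter> seq_worlds C = {}
   \<and> Ev \<subseteq> (\<Union>P\<in>set Ps. seq_nvars P) \<and> Ev \<inter> seq_nvars C = {}"
  by (erule crule.cases) auto

lemma rinst_weak: "rinst R ps S \<Longrightarrow> ((\<Union>P\<in>set ps. seq_worlds P) - seq_worlds S) \<inter> seq_worlds W = {} \<Longrightarrow>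
   ((\<Union>P\<in>set ps. seq_nvars P) - seq_nvars S) \<inter> seq_nvars W = {} \<Longrightarrow>
   rinst R (map (addW W) ps) (addW W S)"
proof -
  assume r: "rinst R ps S" and hw: "((\<Union>P\<in>set ps. seq_worlds P) - seq_worlds S) \<inter> seq_worlds W = {}"
    and hv: "((\<Union>P\<in>set ps. seq_nvars P) - seq_nvars S) \<inter> seq_nvars W = {}"
  from rinst_crule'[OF r] obtain Ps C Ew Ev W0 where c: "crule R Ps C Ew Ev" and S: "S = addW W0 C"
    and ps: "ps = map (addW W0) Ps" and fw: "Ew \<inter> seq_worlds W0 = {}" and fv: "Ev \<inter> seq_nvars W0 = {}" by blast
  note E = crule_E[OF c]
  have "Ew \<inter> seq_worlds (addW W W0) = {}"
  proof -
    have "Ew \<subseteq> (\<Union>P\<in>set ps. seq_worlds P) - seq_worlds S" using E fw S ps by auto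
    then show ?thesis using hw fw by auto
  qed
  moreover have "Ev \<inter> seq_nvars (addW W W0) = {}"
  proof -
    have "Ev \<subseteq> (\<Union>P\<in>set ps. seq_nvars P) - seq_nvars S" using E fv S ps by auto
    then show ?thesis using hv fv by auto
  qed
  ultimately have "rinst R (map (addW (addW W W0)) Ps) (addW (addW W W0) C)"
    using crule_rinst'[OF c] by blast
  then show ?thesis using S ps by (simp add: addW_addW comp_def)
qed

definition sh :: "nat set \<Rightarrow> nat \<Rightarrow> nat \<Rightarrow> nat" where
  "sh K M y = (if y \<in> K then y else y + M)"

lemma inj_sh: "\<forall>k\<in>K. k < M \<Longrightarrow> inj (sh K M)"
  unfolding inj_def sh_def by (metis add_right_cancel le_add2 not_le)

lemma finite_nb_worlds[simp]: "finite (nb_worlds a)" by (cases a) auto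
lemma finite_nb_vars[simp]: "finite (nb_vars a)" by (cases a) auto
lemma finite_lf_worlds[simp]: "finite (lf_worlds p)" by (cases p) auto
lemma finite_lf_nvars[simp]: "finite (lf_nvars p)" by (cases p) auto
lemma finite_seq_worlds[simp]: "finite (seq_worlds S)" by (simp add: seq_worlds_def)
lemma finite_seq_nvars[simp]: "finite (seq_nvars S)" by (simp add: seq_nvars_def)

lemma rnb_id: "(\<forall>x\<in>nb_worlds a. f x = x) \<Longrightarrow> (\<forall>k\<in>nb_vars a. g k = k) \<Longrightarrow> rnb f g a = a"
  by (cases a) auto
lemma rlf_id: "(\<forall>x\<in>lf_worlds p. f x = x) \<Longrightarrow> (\<forall>k\<in>lf_nvars p. g k = k) \<Longrightarrow> rlf f g p = p"
  by (cases p) (auto simp: rnb_id)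
lemma image_mset_rlf_id: "(\<forall>p\<in>#G. (\<forall>x\<in>lf_worlds p. f x = x) \<and> (\<forall>k\<in>lf_nvars p. g k = k)) \<Longrightarrow> image_mset (rlf f g) G = G"
  by (induction G) (auto simp: rlf_id)
lemma rseq_id: "(\<forall>x\<in>seq_worlds S. f x = x) \<Longrightarrow> (\<forall>k\<in>seq_nvars S. g k = k) \<Longrightarrow> rseq f g S = S"
  unfolding rseq_def seq_worlds_def seq_nvars_def
  by (cases S) (auto intro!: image_mset_rlf_id)

lemma ex_bound: "finite (A::nat set) \<Longrightarrow> \<exists>M. \<forall>k\<in>A. k < M"
  by (metis finite_nat_set_iff_bounded)

lemma fresh_ren:
  assumes fins: "finite (K::nat set)" "finite (A::nat set)" "finite (Kv::nat set)" "finite (Av::nat set)"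
  shows "\<exists>f g. inj f \<and> inj g \<and> (\<forall>x\<in>K. f x = x) \<and> (\<forall>k\<in>Kv. g k = k)
   \<and> (\<forall>x. x \<notin> K \<longrightarrow> f x \<notin> K \<union> A) \<and> (\<forall>k. k \<notin> Kv \<longrightarrow> g k \<notin> Kv \<union> Av)"
proof -
  obtain M where M: "\<forall>k\<in>K \<union> A. k < M" using ex_bound[of "K \<union> A"] fins by (metis finite_UnI)
  obtain Mv where Mv: "\<forall>k\<in>Kv \<union> Av. k < Mv" using ex_bound[of "Kv \<union> Av"] fins by (metis finite_UnI)
  show ?thesis
    apply (rule exI[of _ "sh K M"], rule exI[of _ "sh Kv Mv"])
    using M Mv by (auto simp: inj_sh sh_def)
qed

lemma initial_addW: "initial S \<Longrightarrow> initial (addW W S)"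
  by (auto simp: initial_iff addW_def)

lemma weakening: "derivable L n S \<Longrightarrow> derivable L n (addW W S)"
proof (induction n arbitrary: S W)
  case 0
  then have "initial S" by (cases rule: derivable.cases) auto
  then show ?case by (simp add: initial_addW derivable.init)
next
  case (Suc n)
  from Suc.prems show ?case
  proof (cases rule: derivable.cases)
    case init then show ?thesis by (simp add: initial_addW derivable.init)
  next
    case (step R ps)
    obtain f g where f: "inj f" and g: "inj g" and fK: "\<forall>x\<in>seq_worlds S. f x = x" and gK: "\<forall>k\<in>seq_nvars S. g k = k"
      and fA: "\<forall>x. x \<notin> seq_worlds S \<longrightarrow> f x \<notin> seq_worlds S \<union> seq_worlds W"
      and gA: "\<forall>k. k \<notin> seq_nvars S \<longrightarrow> g k \<notin> seq_nvars S \<union> seq_nvars W"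
      using fresh_ren[of "seq_worlds S" "seq_worlds W" "seq_nvars S" "seq_nvars W"] by auto
    have Sid: "rseq f g S = S" using rseq_id fK gK by blast
    have r0: "rinst R ps S" and d: "\<forall>P\<in>set ps. derivable L n P" and RL: "R \<in> rules L" using step by auto
    have r: "rinst R (map (rseq f g) ps) S" using rinst_ren[OF r0 f g] Sid by simp
    have r2: "rinst R (map (addW W) (map (rseq f g) ps)) (addW W S)"
    proof (rule rinst_weak[OF r])
      show "((\<Union>P\<in>set (map (rseq f g) ps). seq_worlds P) - seq_worlds S) \<inter> seq_worlds W = {}"
        using fA fK by (auto; metis)
      show "((\<Union>P\<in>set (map (rseq f g) ps). seq_nvars P) - seq_nvars S) \<inter> seq_nvars W = {}"
        using gA gK by (auto; metis)
    qed
    have "\<forall>P\<in>set ps. derivable L n (addW W (rseq f g P))"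
    proof
      fix P assume "P \<in> set ps"
      then have "derivable L n P" using d by auto
      then show "derivable L n (addW W (rseq f g P))" using Suc.IH derivable_ren f g by blast
    qed
    then have "\<forall>P\<in>set (map (addW W) (map (rseq f g) ps)). derivable L n P" by simp
    then show ?thesis using RL r2 derivable.step[OF RL r2] by (simp add: local.step(1))
  qed
qed


definition put :: "bool \<Rightarrow> 'p lf \<Rightarrow> 'p seq" where
  "put b p = (if b then ({#p#}, {#}) else ({#}, {#p#}))"

inductive inv :: "bool \<Rightarrow> 'p lf \<Rightarrow> 'p seq \<Rightarrow> bool" where
  "inv True (Lab x (And A B)) ({#Lab x A, Lab x B#}, {#})"
| "inv True (Lab x (Or A B)) ({#Lab x A#}, {#})"
| "inv True (Lab x (Or A B)) ({#Lab x B#}, {#})"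
| "inv True (Lab x (Imp A B)) ({#}, {#Lab x A#})"
| "inv True (Lab x (Imp A B)) ({#Lab x B#}, {#})"
| "x \<notin> nb_worlds a \<Longrightarrow> inv True (Ex a A) ({#Mem x a, Lab x A#}, {#})"
| "k \<notin> nb_vars a \<Longrightarrow> inv True (Cnd x a A B) ({#InN (NL k) x, Sub (NL k) a, Ex (NL k) A, All (NL k) (Imp A B)#}, {#})"
| "inv False (Lab x (And A B)) ({#}, {#Lab x A#})"
| "inv False (Lab x (And A B)) ({#}, {#Lab x B#})"
| "inv False (Lab x (Or A B)) ({#}, {#Lab x A, Lab x B#})"
| "inv False (Lab x (Imp A B)) ({#Lab x A#}, {#Lab x B#})"
| "x \<notin> nb_worlds a \<Longrightarrow> inv False (All a A) ({#Mem x a#}, {#Lab x A#})"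
| "inv False (Lab x (Cond A B)) ({#InN (NL k) x, Ex (NL k) A#}, {#Cnd x (NL k) A B#})"

lemma atx_Lab[simp]: "atx s x = Lab y A \<longleftrightarrow> (\<exists>p. s = AtP p \<and> A = Atom p \<and> y = x)" by (cases s) auto
lemma atx_Ex[simp]: "atx s x \<noteq> Ex a A" by (cases s) auto
lemma atx_All[simp]: "atx s x \<noteq> All a A" by (cases s) auto
lemma atx_Cnd[simp]: "atx s x \<noteq> Cnd y a A B" by (cases s) auto

lemma mset_eq_addD: "mset ps = add_mset a M \<Longrightarrow> a \<in> set ps"
proof -
  assume "mset ps = add_mset a M"
  then have "a \<in># mset ps" by simp
  then show ?thesis by simp
qed
lemma contr_mem: "contr ps l \<Longrightarrow> a \<in> set ps \<Longrightarrow> a \<in> set l"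
  by (simp add: contr_def)

lemma principal_ne: "crule R Ps C Ew Ev \<Longrightarrow> inv b p Psi \<Longrightarrow> C = addW (put b p) C' \<Longrightarrow>
  seq_worlds Psi \<subseteq> lf_worlds p \<Longrightarrow> seq_nvars Psi \<subseteq> lf_nvars p \<Longrightarrow> \<exists>Pc\<in>set Ps. Pc = addW Psi C'"
  apply (erule crule.cases; erule inv.cases)
  apply (auto simp: put_def addW_def add_eq_conv_ex dest!: mset_eq_addD dest: contr_mem)
  done


lemma princ_Ex: "crule R Ps C Ew Ev \<Longrightarrow> C = addW (put True (Ex a A)) C' \<Longrightarrow>
  \<exists>x'. Ps = [({#Mem x' a, Lab x' A#},{#})] \<and> C' = ({#},{#}) \<and> Ew = {x'} \<and> x' \<notin> nb_worlds a"
  apply (erule crule.cases)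
  apply (auto simp: put_def addW_def add_eq_conv_ex prod_eq_iff dest!: mset_eq_addD dest: contr_mem)
  done
lemma princ_Cnd: "crule R Ps C Ew Ev \<Longrightarrow> C = addW (put True (Cnd x a A B)) C' \<Longrightarrow>
  \<exists>k'. Ps = [({#InN (NL k') x, Sub (NL k') a, Ex (NL k') A, All (NL k') (Imp A B)#},{#})] \<and> C' = ({#},{#}) \<and> Ev = {k'} \<and> k' \<notin> nb_vars a"
  apply (erule crule.cases)
  apply (auto simp: put_def addW_def add_eq_conv_ex prod_eq_iff dest!: mset_eq_addD dest: contr_mem)
  done
lemma princ_All: "crule R Ps C Ew Ev \<Longrightarrow> C = addW (put False (All a A)) C' \<Longrightarrow>
  \<exists>x'. Ps = [({#Mem x' a#}, {#Lab x' A#})] \<and> C' = ({#},{#}) \<and> Ew = {x'} \<and> x' \<notin> nb_worlds a"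
  apply (erule crule.cases)
  apply (auto simp: put_def addW_def add_eq_conv_ex prod_eq_iff dest!: mset_eq_addD dest: contr_mem)
  done
lemma princ_Cond: "crule R Ps C Ew Ev \<Longrightarrow> C = addW (put False (Lab x (Cond A B))) C' \<Longrightarrow>
  \<exists>k'. Ps = [({#InN (NL k') x, Ex (NL k') A#}, {#Cnd x (NL k') A B#})] \<and> C' = ({#},{#}) \<and> Ev = {k'}"
  apply (erule crule.cases)
  apply (auto simp: put_def addW_def add_eq_conv_ex prod_eq_iff dest!: mset_eq_addD dest: contr_mem)
  done

definition swp :: "nat \<Rightarrow> nat \<Rightarrow> nat \<Rightarrow> nat" where
  "swp a b y = (if y = a then b else if y = b then a else y)"
lemma inj_swp: "inj (swp a b)" by (auto simp: inj_def swp_def)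
lemma rseq_idid: "rseq id id S = S" by (rule rseq_id) auto

lemma principal: "crule R Ps C Ew Ev \<Longrightarrow> inv b p Psi \<Longrightarrow> C = addW (put b p) C' \<Longrightarrow>
  \<exists>Pc\<in>set Ps. \<exists>f g. inj f \<and> inj g \<and> (\<forall>y. y \<notin> Ew \<union> (seq_worlds Psi - lf_worlds p) \<longrightarrow> f y = y)
    \<and> (\<forall>k. k \<notin> Ev \<union> (seq_nvars Psi - lf_nvars p) \<longrightarrow> g k = k) \<and> rseq f g Pc = addW Psi C'"
proof -
  assume c: "crule R Ps C Ew Ev" and i: "inv b p Psi" and C: "C = addW (put b p) C'"
  show ?thesis
  proof (cases "seq_worlds Psi \<subseteq> lf_worlds p \<and> seq_nvars Psi \<subseteq> lf_nvars p")
    case True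
    then obtain Pc where "Pc \<in> set Ps" "Pc = addW Psi C'" using principal_ne[OF c i C] by blast
    then show ?thesis by (intro bexI[of _ Pc] exI[of _ id]) (auto simp: rseq_idid)
  next
    case False
    from i False show ?thesis
    proof cases
      case (6 x a A)
      then obtain x' where P: "Ps = [({#Mem x' a, Lab x' A#},{#})]" "C' = ({#},{#})" "Ew = {x'}" "x' \<notin> nb_worlds a"
        using princ_Ex[of R Ps C Ew Ev a A C'] c C by blast
      have "rnb (swp x' x) id a = a" using P 6 by (intro rnb_id) (auto simp: swp_def)
      then show ?thesis using P 6
        by (intro bexI[of _ "hd Ps"] exI[of _ "swp x' x"] exI[of _ id])
           (auto simp: inj_swp rseq_def addW_def swp_def)
    next
      case (7 k a x A B)
      then obtain k' where P: "Ps = [({#InN (NL k') x, Sub (NL k') a, Ex (NL k') A, All (NL k') (Imp A B)#},{#})]" "C' = ({#},{#})" "Ev = {k'}" "k' \<notin> nb_vars a"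
        using princ_Cnd[of R Ps C Ew Ev x a A B C'] c C by blast
      have "rnb id (swp k' k) a = a" using P 7 by (intro rnb_id) (auto simp: swp_def)
      then show ?thesis using P 7
        by (intro bexI[of _ "hd Ps"] exI[of _ id] exI[of _ "swp k' k"])
           (auto simp: inj_swp rseq_def addW_def swp_def)
    next
      case (12 x a A)
      then obtain x' where P: "Ps = [({#Mem x' a#}, {#Lab x' A#})]" "C' = ({#},{#})" "Ew = {x'}" "x' \<notin> nb_worlds a"
        using princ_All[of R Ps C Ew Ev a A C'] c C by blast
      have "rnb (swp x' x) id a = a" using P 12 by (intro rnb_id) (auto simp: swp_def)
      then show ?thesis using P 12
        by (intro bexI[of _ "hd Ps"] exI[of _ "swp x' x"] exI[of _ id])
           (auto simp: inj_swp rseq_def addW_def swp_def)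
    next
      case (13 x A B k)
      then obtain k' where P: "Ps = [({#InN (NL k') x, Ex (NL k') A#}, {#Cnd x (NL k') A B#})]" "C' = ({#},{#})" "Ev = {k'}"
        using princ_Cond[of R Ps C Ew Ev x A B C'] c C by blast
      then show ?thesis using 13
        by (intro bexI[of _ "hd Ps"] exI[of _ id] exI[of _ "swp k' k"])
           (auto simp: inj_swp rseq_def addW_def swp_def)
    qed (auto simp: addW_def)
  qed
qed



lemma seq_worlds_put[simp]: "seq_worlds (put b p) = lf_worlds p" by (simp add: put_def)
lemma seq_nvars_put[simp]: "seq_nvars (put b p) = lf_nvars p" by (simp add: put_def)
lemma addW_comm: "addW W (addW V X) = addW V (addW W X)" by (simp add: addW_def ac_simps)

lemma initial_inv: "initial (addW (put b p) S) \<Longrightarrow> inv b p Psi \<Longrightarrow> initial (addW Psi S)"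
  unfolding initial_iff addW_def put_def
  by (erule inv.cases) (auto split: if_splits)

lemma split_put: "addW (put b p) S = addW W C \<Longrightarrow>
  (\<exists>W1. W = addW (put b p) W1 \<and> S = addW W1 C) \<or> (\<exists>C'. C = addW (put b p) C' \<and> S = addW W C')"
proof (cases b)
  case True
  assume e: "addW (put b p) S = addW W C"
  then have e1: "add_mset p (fst S) = fst C + fst W" and e2: "snd S = snd C + snd W"
    using True by (auto simp: addW_def put_def)
  have "p \<in># fst C \<or> p \<in># fst W" using e1[symmetric] by (metis union_iff union_single_eq_member)
  then show ?thesis
  proof
    assume pC: "p \<in># fst C"
    let ?C' = "(fst C - {#p#}, snd C)"
    have "C = addW (put b p) ?C'" using True pC by (auto simp: addW_def put_def prod_eq_iff)
    moreover have "S = addW W ?C'" using e1 e2 pC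
      by (auto simp: addW_def prod_eq_iff) (metis add_mset_remove_trivial multiset_diff_union_assoc single_subset_iff union_commute)
    ultimately show ?thesis by blast
  next
    assume pW: "p \<in># fst W"
    let ?W1 = "(fst W - {#p#}, snd W)"
    have "W = addW (put b p) ?W1" using True pW by (auto simp: addW_def put_def prod_eq_iff)
    moreover have "S = addW ?W1 C" using e1 e2 pW
      by (auto simp: addW_def prod_eq_iff) (metis add_mset_remove_trivial multiset_diff_union_assoc single_subset_iff union_commute)
    ultimately show ?thesis by blast
  qed
next
  case False
  assume e: "addW (put b p) S = addW W C"
  then have e1: "add_mset p (snd S) = snd C + snd W" and e2: "fst S = fst C + fst W"
    using False by (auto simp: addW_def put_def)
  have "p \<in># snd C \<or> p \<in># snd W" using e1[symmetric] by (metis union_iff union_single_eq_member)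
  then show ?thesis
  proof
    assume pC: "p \<in># snd C"
    let ?C' = "(fst C, snd C - {#p#})"
    have "C = addW (put b p) ?C'" using False pC by (auto simp: addW_def put_def prod_eq_iff)
    moreover have "S = addW W ?C'" using e1 e2 pC
      by (auto simp: addW_def prod_eq_iff) (metis add_mset_remove_trivial multiset_diff_union_assoc single_subset_iff union_commute)
    ultimately show ?thesis by blast
  next
    assume pW: "p \<in># snd W"
    let ?W1 = "(fst W, snd W - {#p#})"
    have "W = addW (put b p) ?W1" using False pW by (auto simp: addW_def put_def prod_eq_iff)
    moreover have "S = addW ?W1 C" using e1 e2 pW
      by (auto simp: addW_def prod_eq_iff) (metis add_mset_remove_trivial multiset_diff_union_assoc single_subset_iff union_commute)
    ultimately show ?thesis by blast
  qed
qed


lemma inversion: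
  "derivable L n (addW (put b p) S) \<Longrightarrow> inv b p Psi \<Longrightarrow>
   (seq_worlds Psi - lf_worlds p) \<inter> seq_worlds S = {} \<Longrightarrow> (seq_nvars Psi - lf_nvars p) \<inter> seq_nvars S = {} \<Longrightarrow>
   derivable L n (addW Psi S)"
proof (induction n arbitrary: S)
  case 0
  then have "initial (addW (put b p) S)" by (cases rule: derivable.cases) auto
  then show ?case using initial_inv 0 by (blast intro: derivable.init)
next
  case (Suc n)
  from Suc.prems(1) show ?case
  proof (cases rule: derivable.cases)
    case init then show ?thesis using initial_inv Suc.prems by (blast intro: derivable.init)
  next
    case (step R ps)
    have r0: "rinst R ps (addW (put b p) S)" and d: "\<forall>P\<in>set ps. derivable L n P" and RL: "R \<in> rules L"
      using step by auto
    from rinst_crule'[OF r0] obtain Ps C Ew Ev W where c: "crule R Ps C Ew Ev" and SW: "addW (put b p) S = addW W C"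
      and ps: "ps = map (addW W) Ps" and fw: "Ew \<inter> seq_worlds W = {}" and fv: "Ev \<inter> seq_nvars W = {}" by blast
    note E = crule_E[OF c]
    from split_put[OF SW] show ?thesis
    proof
      assume "\<exists>W1. W = addW (put b p) W1 \<and> S = addW W1 C"
      then obtain W1 where W: "W = addW (put b p) W1" and S: "S = addW W1 C" by blast
      obtain f g where f: "inj f" and g: "inj g"
        and fK: "\<forall>x\<in>seq_worlds S \<union> lf_worlds p. f x = x" and gK: "\<forall>k\<in>seq_nvars S \<union> lf_nvars p. g k = k"
        and fA: "\<forall>x. x \<notin> seq_worlds S \<union> lf_worlds p \<longrightarrow> f x \<notin> (seq_worlds S \<union> lf_worlds p) \<union> seq_worlds Psi"
        and gA: "\<forall>k. k \<notin> seq_nvars S \<union> lf_nvars p \<longrightarrow> g k \<notin> (seq_nvars S \<union> lf_nvars p) \<union> seq_nvars Psi"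
        using fresh_ren[of "seq_worlds S \<union> lf_worlds p" "seq_worlds Psi" "seq_nvars S \<union> lf_nvars p" "seq_nvars Psi"]
        by auto
      have EwK: "Ew \<inter> (seq_worlds S \<union> lf_worlds p) = {}" using fw E W S by auto
      have EvK: "Ev \<inter> (seq_nvars S \<union> lf_nvars p) = {}" using fv E W S by auto
      have Cid: "rseq f g C = C" using fK gK S by (intro rseq_id) auto
      have Wid: "rseq f g W = W" using fK gK S W by (intro rseq_id) auto
      have c2: "crule R (map (rseq f g) Ps) C (f ` Ew) (g ` Ev)" using crule_ren[OF c f g] Cid by simp
      let ?W' = "addW Psi W1"
      have "f ` Ew \<inter> seq_worlds ?W' = {}"
      proof -
        have "\<forall>z\<in>Ew. f z \<notin> seq_worlds S \<union> lf_worlds p \<union> seq_worlds Psi" using EwK fA by blast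
        then show ?thesis using S by auto
      qed
      moreover have "g ` Ev \<inter> seq_nvars ?W' = {}"
      proof -
        have "\<forall>z\<in>Ev. g z \<notin> seq_nvars S \<union> lf_nvars p \<union> seq_nvars Psi" using EvK gA by blast
        then show ?thesis using S by auto
      qed
      ultimately have r2: "rinst R (map (addW ?W') (map (rseq f g) Ps)) (addW ?W' C)"
        using crule_rinst'[OF c2] by blast
      have concl: "addW ?W' C = addW Psi S" using S by (simp add: addW_addW)
      have "\<forall>Pc\<in>set Ps. derivable L n (addW ?W' (rseq f g Pc))"
      proof
        fix Pc assume Pc: "Pc \<in> set Ps"
        then have "derivable L n (addW W Pc)" using d ps by auto
        then have "derivable L n (rseq f g (addW W Pc))" using derivable_ren f g by blast
        then have d1: "derivable L n (addW (put b p) (addW W1 (rseq f g Pc)))"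
          using Wid W by (simp add: rseq_addW addW_addW)
        have fr1: "(seq_worlds Psi - lf_worlds p) \<inter> seq_worlds (addW W1 (rseq f g Pc)) = {}"
        proof -
          have "\<forall>y\<in>seq_worlds Pc. f y \<notin> seq_worlds Psi - lf_worlds p"
            using fK fA Suc.prems(3) by (metis DiffD1 DiffD2 Int_iff Un_iff empty_iff)
          then show ?thesis using Suc.prems(3) S by auto
        qed
        have fr2: "(seq_nvars Psi - lf_nvars p) \<inter> seq_nvars (addW W1 (rseq f g Pc)) = {}"
        proof -
          have "\<forall>y\<in>seq_nvars Pc. g y \<notin> seq_nvars Psi - lf_nvars p"
            using gK gA Suc.prems(4) by (metis DiffD1 DiffD2 Int_iff Un_iff empty_iff)
          then show ?thesis using Suc.prems(4) S by auto
        qed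
        have "derivable L n (addW Psi (addW W1 (rseq f g Pc)))"
          using Suc.IH[OF d1 Suc.prems(2) fr1 fr2] .
        then show "derivable L n (addW ?W' (rseq f g Pc))" by (simp add: addW_addW)
      qed
      then have "\<forall>P\<in>set (map (addW ?W') (map (rseq f g) Ps)). derivable L n P" by simp
      then have "derivable L (Suc n) (addW ?W' C)" using derivable.step[OF RL r2] by blast
      then show ?thesis using concl by simp
    next
      assume "\<exists>C'. C = addW (put b p) C' \<and> S = addW W C'"
      then obtain C' where C: "C = addW (put b p) C'" and S: "S = addW W C'" by blast
      from principal[OF c Suc.prems(2) C] obtain Pc f g where Pc: "Pc \<in> set Ps" and f: "inj f" and g: "inj g"
        and fid: "\<forall>y. y \<notin> Ew \<union> (seq_worlds Psi - lf_worlds p) \<longrightarrow> f y = y"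
        and gid: "\<forall>k. k \<notin> Ev \<union> (seq_nvars Psi - lf_nvars p) \<longrightarrow> g k = k"
        and eq: "rseq f g Pc = addW Psi C'" by blast
      have "derivable L n (addW W Pc)" using d ps Pc by auto
      then have "derivable L n (rseq f g (addW W Pc))" using derivable_ren f g by blast
      moreover have "rseq f g W = W"
      proof (rule rseq_id)
        show "\<forall>x\<in>seq_worlds W. f x = x" using fid fw Suc.prems(3) S by auto
        show "\<forall>k\<in>seq_nvars W. g k = k" using gid fv Suc.prems(4) S by auto
      qed
      ultimately have "derivable L n (addW Psi S)" using eq S by (simp add: rseq_addW addW_comm)
      then show ?thesis using derivable_mono by fastforce
    qed
  qed
qed


lemma weak2: "derivable L n (G, D) \<Longrightarrow> G \<subseteq># G' \<Longrightarrow> D \<subseteq># D' \<Longrightarrow> derivable L n (G', D')"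
proof -
  assume d: "derivable L n (G, D)" and s1: "G \<subseteq># G'" and s2: "D \<subseteq># D'"
  have "derivable L n (addW (G' - G, D' - D) (G, D))" using weakening[OF d] .
  moreover have "addW (G' - G, D' - D) (G, D) = (G', D')" using s1 s2 by (simp add: addW_def)
  ultimately show ?thesis by simp
qed

lemma inv_apply: "derivable L n S \<Longrightarrow> S = addW (put b p) S0 \<Longrightarrow> inv b p Psi \<Longrightarrow>
   (seq_worlds Psi - lf_worlds p) \<inter> seq_worlds S0 = {} \<Longrightarrow> (seq_nvars Psi - lf_nvars p) \<inter> seq_nvars S0 = {} \<Longrightarrow>
   P = addW Psi S0 \<Longrightarrow> derivable L n P"
  using inversion by blast

lemma c_LAnd: "derivable L n ({#Lab x (And A B)#} + G, D) \<Longrightarrow> derivable L n ({#Lab x A, Lab x B#} + G, D)"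
  apply (rule inv_apply[of L n _ True "Lab x (And A B)" "(G, D)" "({#Lab x A, Lab x B#}, {#})"])
  apply assumption
  apply (simp add: addW_def put_def)
  apply (rule inv.intros)
  apply (auto simp: addW_def)
  done

lemma c_RAnd1: "derivable L n (G, D + {#Lab x (And A B)#}) \<Longrightarrow> derivable L n (G, D + {#Lab x A#})"
  apply (rule inv_apply[of L n _ False "Lab x (And A B)" "(G, D)" "({#}, {#Lab x A#})"])
  apply assumption
  apply (simp add: addW_def put_def)
  apply (rule inv.intros)
  apply (auto simp: addW_def)
  done

lemma c_RAnd2: "derivable L n (G, D + {#Lab x (And A B)#}) \<Longrightarrow> derivable L n (G, D + {#Lab x B#})"
  apply (rule inv_apply[of L n _ False "Lab x (And A B)" "(G, D)" "({#}, {#Lab x B#})"])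
  apply assumption
  apply (simp add: addW_def put_def)
  apply (rule inv.intros)
  apply (auto simp: addW_def)
  done

lemma c_LOr1: "derivable L n ({#Lab x (Or A B)#} + G, D) \<Longrightarrow> derivable L n ({#Lab x A#} + G, D)"
  apply (rule inv_apply[of L n _ True "Lab x (Or A B)" "(G, D)" "({#Lab x A#}, {#})"])
  apply assumption
  apply (simp add: addW_def put_def)
  apply (rule inv.intros)
  apply (auto simp: addW_def)
  done

lemma c_LOr2: "derivable L n ({#Lab x (Or A B)#} + G, D) \<Longrightarrow> derivable L n ({#Lab x B#} + G, D)"
  apply (rule inv_apply[of L n _ True "Lab x (Or A B)" "(G, D)" "({#Lab x B#}, {#})"])
  apply assumption
  apply (simp add: addW_def put_def)
  apply (rule inv.intros)
  apply (auto simp: addW_def)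
  done

lemma c_ROr: "derivable L n (G, D + {#Lab x (Or A B)#}) \<Longrightarrow> derivable L n (G, D + {#Lab x A, Lab x B#})"
  apply (rule inv_apply[of L n _ False "Lab x (Or A B)" "(G, D)" "({#}, {#Lab x A, Lab x B#})"])
  apply assumption
  apply (simp add: addW_def put_def)
  apply (rule inv.intros)
  apply (auto simp: addW_def)
  done

lemma c_LImp1: "derivable L n ({#Lab x (Imp A B)#} + G, D) \<Longrightarrow> derivable L n (G, D + {#Lab x A#})"
  apply (rule inv_apply[of L n _ True "Lab x (Imp A B)" "(G, D)" "({#}, {#Lab x A#})"])
  apply assumption
  apply (simp add: addW_def put_def)
  apply (rule inv.intros)
  apply (auto simp: addW_def)
  done

lemma c_LImp2: "derivable L n ({#Lab x (Imp A B)#} + G, D) \<Longrightarrow> derivable L n ({#Lab x B#} + G, D)"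
  apply (rule inv_apply[of L n _ True "Lab x (Imp A B)" "(G, D)" "({#Lab x B#}, {#})"])
  apply assumption
  apply (simp add: addW_def put_def)
  apply (rule inv.intros)
  apply (auto simp: addW_def)
  done

lemma c_RImp: "derivable L n (G, D + {#Lab x (Imp A B)#}) \<Longrightarrow> derivable L n ({#Lab x A#} + G, D + {#Lab x B#})"
  apply (rule inv_apply[of L n _ False "Lab x (Imp A B)" "(G, D)" "({#Lab x A#}, {#Lab x B#})"])
  apply assumption
  apply (simp add: addW_def put_def)
  apply (rule inv.intros)
  apply (auto simp: addW_def)
  done

lemma c_RAll: "x \<notin> seq_worlds (G, D + {#All a A#}) \<Longrightarrow> derivable L n (G, D + {#All a A#}) \<Longrightarrow> derivable L n ({#Mem x a#} + G, D + {#Lab x A#})"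
  apply (rule inv_apply[of L n _ False "All a A" "(G, D)" "({#Mem x a#}, {#Lab x A#})"])
  apply assumption
  apply (simp add: addW_def put_def)
  apply (rule inv.intros)
  apply (auto simp: addW_def)
  done

lemma c_LEx: "x \<notin> seq_worlds ({#Ex a A#} + G, D) \<Longrightarrow> derivable L n ({#Ex a A#} + G, D) \<Longrightarrow> derivable L n ({#Mem x a, Lab x A#} + G, D)"
  apply (rule inv_apply[of L n _ True "Ex a A" "(G, D)" "({#Mem x a, Lab x A#}, {#})"])
  apply assumption
  apply (simp add: addW_def put_def)
  apply (rule inv.intros)
  apply (auto simp: addW_def)
  done

lemma c_RCond: "k \<notin> seq_nvars (G, D + {#Lab x (Cond A B)#}) \<Longrightarrow> derivable L n (G, D + {#Lab x (Cond A B)#}) \<Longrightarrow> derivable L n ({#InN (NL k) x, Ex (NL k) A#} + G, D + {#Cnd x (NL k) A B#})"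
  apply (rule inv_apply[of L n _ False "Lab x (Cond A B)" "(G, D)" "({#InN (NL k) x, Ex (NL k) A#}, {#Cnd x (NL k) A B#})"])
  apply assumption
  apply (simp add: addW_def put_def)
  apply (rule inv.intros)
  apply (auto simp: addW_def)
  done

lemma c_LBar: "k \<notin> seq_nvars ({#Cnd x a A B#} + G, D) \<Longrightarrow> derivable L n ({#Cnd x a A B#} + G, D) \<Longrightarrow> derivable L n ({#InN (NL k) x, Sub (NL k) a, Ex (NL k) A, All (NL k) (Imp A B)#} + G, D)"
  apply (rule inv_apply[of L n _ True "Cnd x a A B" "(G, D)" "({#InN (NL k) x, Sub (NL k) a, Ex (NL k) A, All (NL k) (Imp A B)#}, {#})"])
  apply assumption
  apply (simp add: addW_def put_def)
  apply (rule inv.intros)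
  apply (auto simp: addW_def)
  done

lemma weak3: "derivable L n S \<Longrightarrow> fst P = M + fst S \<Longrightarrow> snd P = snd S + N \<Longrightarrow> derivable L n P"
proof -
  assume d: "derivable L n S" and e1: "fst P = M + fst S" and e2: "snd P = snd S + N"
  have "addW (M, N) S = P" using e1 e2 by (simp add: addW_def prod_eq_iff add.commute)
  then show ?thesis using weakening[OF d, of "(M, N)"] by simp
qed

lemma w_LAll: "derivable L n ({#Mem x a, All a A#} + G, D) \<Longrightarrow> derivable L n ({#Lab x A, Mem x a, All a A#} + G, D)"
  by (erule weak3[where M="{#Lab x A#}" and N="{#}"]) (simp_all add: multiset_eq_iff)

lemma w_REx: "derivable L n ({#Mem x a#} + G, D + {#Ex a A#}) \<Longrightarrow> derivable L n ({#Mem x a#} + G, D + {#Lab x A, Ex a A#})"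
  by (erule weak3[where M="{#}" and N="{#Lab x A#}"]) (simp_all add: multiset_eq_iff)

lemma w_LCond1: "derivable L n ({#InN a x, Lab x (Cond A B)#} + G, D) \<Longrightarrow> derivable L n ({#InN a x, Lab x (Cond A B)#} + G, D + {#Ex a A#})"
  by (erule weak3[where M="{#}" and N="{#Ex a A#}"]) (simp_all add: multiset_eq_iff)

lemma w_LCond2: "derivable L n ({#InN a x, Lab x (Cond A B)#} + G, D) \<Longrightarrow> derivable L n ({#Cnd x a A B, InN a x, Lab x (Cond A B)#} + G, D)"
  by (erule weak3[where M="{#Cnd x a A B#}" and N="{#}"]) (simp_all add: multiset_eq_iff)

lemma w_RBar1: "derivable L n ({#InN c x, Sub c a#} + G, D + {#Cnd x a A B#}) \<Longrightarrow> derivable L n ({#InN c x, Sub c a#} + G, D + {#Cnd x a A B, Ex c A#})"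
  by (erule weak3[where M="{#}" and N="{#Ex c A#}"]) (simp_all add: multiset_eq_iff)

lemma w_RBar2: "derivable L n ({#InN c x, Sub c a#} + G, D + {#Cnd x a A B#}) \<Longrightarrow> derivable L n ({#InN c x, Sub c a#} + G, D + {#Cnd x a A B, All c (Imp A B)#})"
  by (erule weak3[where M="{#}" and N="{#All c (Imp A B)#}"]) (simp_all add: multiset_eq_iff)

lemma w_Ref: "derivable L n (G, D) \<Longrightarrow> derivable L n ({#Sub a a#} + G, D)"
  by (erule weak3[where M="{#Sub a a#}" and N="{#}"]) (simp_all add: multiset_eq_iff)

lemma w_Tr: "derivable L n ({#Sub c b, Sub b a#} + G, D) \<Longrightarrow> derivable L n ({#Sub c a, Sub c b, Sub b a#} + G, D)"
  by (erule weak3[where M="{#Sub c a#}" and N="{#}"]) (simp_all add: multiset_eq_iff)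

lemma w_LSub: "derivable L n ({#Mem x a, Sub a b#} + G, D) \<Longrightarrow> derivable L n ({#Mem x a, Sub a b, Mem x b#} + G, D)"
  by (erule weak3[where M="{#Mem x b#}" and N="{#}"]) (simp_all add: multiset_eq_iff)

lemma w_RuleN: "derivable L n (G, D) \<Longrightarrow> derivable L n ({#InN (NL k) x#} + G, D)"
  by (erule weak3[where M="{#InN (NL k) x#}" and N="{#}"]) (simp_all add: multiset_eq_iff)

lemma w_Rule0: "derivable L n ({#InN a x#} + G, D) \<Longrightarrow> derivable L n ({#Mem y a, InN a x#} + G, D)"
  by (erule weak3[where M="{#Mem y a#}" and N="{#}"]) (simp_all add: multiset_eq_iff)

lemma w_RuleT: "derivable L n (G, D) \<Longrightarrow> derivable L n ({#Mem x (NL k), InN (NL k) x#} + G, D)"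
  by (erule weak3[where M="{#Mem x (NL k), InN (NL k) x#}" and N="{#}"]) (simp_all add: multiset_eq_iff)

lemma w_RuleW: "derivable L n ({#InN a x#} + G, D) \<Longrightarrow> derivable L n ({#Mem x a, InN a x#} + G, D)"
  by (erule weak3[where M="{#Mem x a#}" and N="{#}"]) (simp_all add: multiset_eq_iff)

lemma w_Single: "derivable L n ({#InN (Sing x) x#} + G, D) \<Longrightarrow> derivable L n ({#Mem x (Sing x), InN (Sing x) x#} + G, D)"
  by (erule weak3[where M="{#Mem x (Sing x)#}" and N="{#}"]) (simp_all add: multiset_eq_iff)

lemma w_RuleC: "derivable L n ({#InN a x#} + G, D) \<Longrightarrow> derivable L n ({#InN (Sing x) x, Sub (Sing x) a, InN a x#} + G, D)"
  by (erule weak3[where M="{#InN (Sing x) x, Sub (Sing x) a#}" and N="{#}"]) (simp_all add: multiset_eq_iff)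

lemma w_Repl1: "derivable L n ({#Mem y (Sing x), atx s x#} + G, D) \<Longrightarrow> derivable L n ({#Mem y (Sing x), atx s x, atx s y#} + G, D)"
  by (erule weak3[where M="{#atx s y#}" and N="{#}"]) (simp_all add: multiset_eq_iff)

lemma w_Repl2: "derivable L n ({#Mem y (Sing x), atx s y#} + G, D) \<Longrightarrow> derivable L n ({#Mem y (Sing x), atx s x, atx s y#} + G, D)"
  by (erule weak3[where M="{#atx s x#}" and N="{#}"]) (simp_all add: multiset_eq_iff)

lemma w_U1: "derivable L n (mset ps + G, D) \<Longrightarrow> derivable L n ({#Mem z (NL k), InN (NL k) x#} + mset ps + G, D)"
  by (erule weak3[where M="{#Mem z (NL k), InN (NL k) x#}" and N="{#}"]) (simp_all add: multiset_eq_iff)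

lemma w_A1: "derivable L n (mset ps + G, D) \<Longrightarrow> derivable L n ({#InN b y#} + mset ps + G, D)"
  by (erule weak3[where M="{#InN b y#}" and N="{#}"]) (simp_all add: multiset_eq_iff)

lemma w_A2: "derivable L n ({#InN a x, Mem y a, InN b y#} + G, D) \<Longrightarrow> derivable L n ({#InN b x, InN a x, Mem y a, InN b y#} + G, D)"
  by (erule weak3[where M="{#InN b x#}" and N="{#}"]) (simp_all add: multiset_eq_iff)

lemma w_U2: "derivable L n (mset ps + G, D) \<Longrightarrow> derivable L n ({#Mem z (NL k), InN (NL k) y#} + mset ps + G, D)"
  by (erule weak3[where M="{#Mem z (NL k), InN (NL k) y#}" and N="{#}"]) (simp_all add: multiset_eq_iff)

theorem mainTheorem11:
  fixes L :: calc and R :: rname and ps :: "'p seq list" and S :: "'p seq" and n :: nat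
  assumes "R \<in> rules L"
    and "rinst R ps S"
    and "wf_seq S"
    and "derivable L n S"
  shows "\<forall>P\<in>set ps. derivable L n P"
proof -
  note d = assms(4)
  from assms(2) show ?thesis
  proof cases
    case 1 then show ?thesis using d c_LAnd by (simp; blast)
  next
    case 2 then show ?thesis using d c_RAnd1 c_RAnd2 by (simp; blast)
  next
    case 3 then show ?thesis using d c_LOr1 c_LOr2 by (simp; blast)
  next
    case 4 then show ?thesis using d c_ROr by (simp; blast)
  next
    case 5 then show ?thesis using d c_LImp1 c_LImp2 by (simp; blast)
  next
    case 6 then show ?thesis using d c_RImp by (simp; blast)
  next
    case 7 then show ?thesis using d w_LAll by (simp; blast)
  next
    case 8 then show ?thesis using d c_RAll by (simp; blast)
  next
    case 9 then show ?thesis using d c_LEx by (simp; blast)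
  next
    case 10 then show ?thesis using d w_REx by (simp; blast)
  next
    case 11 then show ?thesis using d c_RCond by (simp; blast)
  next
    case 12 then show ?thesis using d w_LCond1 w_LCond2 by (simp; blast)
  next
    case 13 then show ?thesis using d w_RBar1 w_RBar2 by (simp; blast)
  next
    case 14 then show ?thesis using d c_LBar by (simp; blast)
  next
    case 15 then show ?thesis using d w_Ref by (simp; blast)
  next
    case 16 then show ?thesis using d w_Tr by (simp; blast)
  next
    case 17 then show ?thesis using d w_LSub by (simp; blast)
  next
    case 18 then show ?thesis using d w_RuleN by (simp; blast)
  next
    case 19 then show ?thesis using d w_Rule0 by (simp; blast)
  next
    case 20 then show ?thesis using d w_RuleT by (simp; blast)
  next
    case 21 then show ?thesis using d w_RuleW by (simp; blast)
  next
    case 22 then show ?thesis using d w_Single by (simp; blast)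
  next
    case 23 then show ?thesis using d w_RuleC by (simp; blast)
  next
    case 24 then show ?thesis using d w_Repl1 by (simp; blast)
  next
    case 25 then show ?thesis using d w_Repl2 by (simp; blast)
  next
    case 26 then show ?thesis using d w_U1 by (simp; blast)
  next
    case 27 then show ?thesis using d w_U2 by (simp; blast)
  next
    case 28 then show ?thesis using d w_A1 by (simp; blast)
  next
    case 29 then show ?thesis using d w_A2 by (simp; blast)
  qed
qed

end
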